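(* Let $n$ be a positive integer and let $0 < a_1, a_2, \ldots, a_n \le 1$ be real numbers. Define \[ \alpha = \sum_{j=1}^n \frac{a_j}{1 - \log_2 a_j} - 2\ln 2 . \] Then for every real $\mu$ with $0 < \mu \le 1 - \exp(-\alpha/8)$, there exists a Boolean function $f\colon \{0,1\}^n \to \{0,1\}$ such that \[ \mu \le \mathbb{E}[f(x)] \le \frac{3}{4}\mu + \frac{1}{4} \] and \[ \mathrm{Inf}_j[f] < a_j \quad \text{for all } 1 \le j \le n. \]
   Context: Here $x$ denotes a uniformly random element of $\{0,1\}^n$, and $\mathbb{E}[f(x)]$ is the expectation with respect to it. For $1 \le j \le n$, $x^j$ denotes $x$ with its $j$-th coordinate flipped, i.e. $x^j = (x_1,\dots,x_{j-1},1-x_j,x_{j+1},\dots,x_n)$, and the influence of the $j$-th variable on $f$ is $\mathrm{Inf}_j[f] = \Pr[f(x) \ne f(x^j)]$. $\ln$ is the natural logarithm and $\log_2$ the base-$2$ logarithm. *)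

theory Defs
  imports "HOL-Library.FuncSet" Complex_Main
begin

text \<open>The Boolean cube {0,1}^n, coordinates indexed by 0..n-1 (paper's j = our j+1),
  points represented as extensional functions {..<n} -> bool (True = 1).\<close>
definition cube :: "nat \<Rightarrow> (nat \<Rightarrow> bool) set" where
  "cube n = ({..<n} \<rightarrow>\<^sub>E (UNIV :: bool set))"

definition flip :: "nat \<Rightarrow> (nat \<Rightarrow> bool) \<Rightarrow> (nat \<Rightarrow> bool)" where
  "flip j x = x(j := \<not> x j)"

definition expect :: "nat \<Rightarrow> ((nat \<Rightarrow> bool) \<Rightarrow> bool) \<Rightarrow> real" where
  "expect n f = (\<Sum>x\<in>cube n. (if f x then 1 else 0)) / 2 ^ n"

definition influence :: "nat \<Rightarrow> ((nat \<Rightarrow> bool) \<Rightarrow> bool) \<Rightarrow> nat \<Rightarrow> real" where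
  "influence n f j = real (card {x \<in> cube n. f x \<noteq> f (flip j x)}) / 2 ^ n"

end

theory Submission imports Defs "HOL-Analysis.Analysis" begin

lemma flip_cube: "t < n \<Longrightarrow> x \<in> cube n \<Longrightarrow> flip t x \<in> cube n"
  unfolding cube_def flip_def by (auto simp: PiE_iff extensional_def)

lemma flip_flip[simp]: "flip t (flip t x) = x"
  unfolding flip_def by auto

lemma flip_other[simp]: "i \<noteq> t \<Longrightarrow> flip t x i = x i"
  unfolding flip_def by auto

lemma flip_same[simp]: "flip t x t = (\<not> x t)"
  unfolding flip_def by auto

lemma half_card:
  assumes "t < n" and inv: "\<And>x. x \<in> cube n \<Longrightarrow> P (flip t x) = P x"
  shows "card {x\<in>cube n. P x \<and> x t} = card {x\<in>cube n. P x \<and> \<not> x t}"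
proof (rule bij_betw_same_card)
  show "bij_betw (flip t) {x\<in>cube n. P x \<and> x t} {x\<in>cube n. P x \<and> \<not> x t}"
    by (rule bij_betw_byWitness[where f'="flip t"])
       (auto simp: flip_cube[OF assms(1)] inv image_def intro!: exI[where x="flip t _"] flip_cube[OF assms(1)])
qed

lemma card_cube: "card (cube n) = 2 ^ n"
  unfolding cube_def by (simp add: card_PiE)

lemma finite_cube: "finite (cube n)"
  unfolding cube_def by (simp add: finite_PiE)

lemma indep:
  assumes "finite S" "S \<subseteq> {..<n}"
    and "\<And>t x. t \<in> S \<Longrightarrow> x \<in> cube n \<Longrightarrow> P (flip t x) = P x"
  shows "card {x\<in>cube n. P x \<and> (\<forall>i\<in>S. x i)} * 2 ^ card S = card {x\<in>cube n. P x}"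
  using assms
proof (induction S rule: finite_induct)
  case empty
  then show ?case by simp
next
  case (insert t S)
  let ?Q = "\<lambda>x. P x \<and> (\<forall>i\<in>S. x i)"
  have tn: "t < n" using insert by auto
  have inv: "?Q (flip t x) = ?Q x" if "x \<in> cube n" for x
    using insert.prems(2)[of t x] that insert.hyps(2) by (metis flip_other insertI1)
  have h: "card {x\<in>cube n. ?Q x \<and> x t} = card {x\<in>cube n. ?Q x \<and> \<not> x t}"
    using half_card[of t n ?Q] tn inv by blast
  have "{x\<in>cube n. ?Q x} = {x\<in>cube n. ?Q x \<and> x t} \<union> {x\<in>cube n. ?Q x \<and> \<not> x t}" by auto
  then have "card {x\<in>cube n. ?Q x} = card {x\<in>cube n. ?Q x \<and> x t} + card {x\<in>cube n. ?Q x \<and> \<not> x t}"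
    by (simp add: card_Un_disjoint finite_cube disjoint_iff)
  with h have c2: "card {x\<in>cube n. ?Q x} = 2 * card {x\<in>cube n. ?Q x \<and> x t}" by simp
  have IH: "card {x\<in>cube n. ?Q x} * 2 ^ card S = card {x\<in>cube n. P x}"
    using insert by auto
  have e: "{x\<in>cube n. P x \<and> (\<forall>i\<in>insert t S. x i)} = {x\<in>cube n. ?Q x \<and> x t}" by auto
  show ?case using IH c2 insert.hyps unfolding e by (simp add: mult.assoc mult.commute)
qed


fun disj :: "nat set list \<Rightarrow> bool" where
  "disj [] = True"
| "disj (T # Ts) = (T \<inter> \<Union>(set Ts) = {} \<and> disj Ts)"

definition tf :: "nat set list \<Rightarrow> (nat \<Rightarrow> bool) \<Rightarrow> bool" where
  "tf Ts x = (\<exists>T\<in>set Ts. \<forall>j\<in>T. x j)"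

lemma tf_flip: "t \<notin> \<Union>(set Ts) \<Longrightarrow> tf Ts (flip t x) = tf Ts x"
  unfolding tf_def by (metis UnionI flip_other)

lemma disj_take: "disj Ts \<Longrightarrow> disj (take m Ts)"
proof (induction Ts arbitrary: m)
  case Nil then show ?case by simp
next
  case (Cons T Ts) then show ?case
    by (cases m) (auto dest: in_set_takeD)
qed

lemma disj_append: "disj A \<Longrightarrow> disj B \<Longrightarrow> \<Union>(set A) \<inter> \<Union>(set B) = {} \<Longrightarrow> disj (A @ B)"
  by (induction A) auto

lemma card_not_tf:
  assumes "disj Ts" "\<forall>T\<in>set Ts. T \<subseteq> {..<n}"
  shows "real (card {x\<in>cube n. \<not> tf Ts x}) = 2 ^ n * prod_list (map (\<lambda>T. 1 - (1/2) ^ card T) Ts)"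
  using assms
proof (induction Ts)
  case Nil
  then show ?case by (simp add: tf_def card_cube)
next
  case (Cons T Ts)
  let ?A = "\<lambda>x. \<not> tf Ts x"
  have fin: "finite T" using Cons.prems(2) finite_subset by auto
  have ind: "card {x\<in>cube n. ?A x \<and> (\<forall>i\<in>T. x i)} * 2 ^ card T = card {x\<in>cube n. ?A x}"
  proof (rule indep[OF fin])
    show "T \<subseteq> {..<n}" using Cons.prems by auto
  next
    fix t x assume "t \<in> T" "x \<in> cube n"
    then have "t \<notin> \<Union>(set Ts)" using Cons.prems(1) by auto
    then show "(\<not> tf Ts (flip t x)) = (\<not> tf Ts x)" by (simp add: tf_flip)
  qed
  have "{x\<in>cube n. ?A x} = {x\<in>cube n. ?A x \<and> (\<forall>i\<in>T. x i)} \<union> {x\<in>cube n. \<not> tf (T#Ts) x}"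
    by (auto simp: tf_def)
  then have "card {x\<in>cube n. ?A x} = card {x\<in>cube n. ?A x \<and> (\<forall>i\<in>T. x i)} + card {x\<in>cube n. \<not> tf (T#Ts) x}"
    by (subst card_Un_disjoint[symmetric]) (auto simp: finite_cube tf_def)
  then have "real (card {x\<in>cube n. \<not> tf (T#Ts) x}) = real (card {x\<in>cube n. ?A x}) - real (card {x\<in>cube n. ?A x}) / 2 ^ card T"
    using ind by (metis (no_types, lifting) add_diff_cancel_left' nonzero_mult_div_cancel_right of_nat_add of_nat_mult of_nat_numeral of_nat_power power_not_zero zero_neq_numeral)
  also have "\<dots> = real (card {x\<in>cube n. ?A x}) * (1 - (1/2) ^ card T)"
    by (simp add: field_simps power_one_over)
  finally show ?case using Cons by simp
qed

lemma tf_inf_sub: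
  assumes "tf Ts x \<noteq> tf Ts (flip j x)"
  shows "\<exists>T\<in>set Ts. j \<in> T \<and> (\<forall>i\<in>T-{j}. x i)"
  using assms unfolding tf_def
  by (metis DiffE flip_other singletonI)

lemma card_ones:
  assumes "S \<subseteq> {..<n}"
  shows "real (card {x\<in>cube n. \<forall>i\<in>S. x i}) = 2 ^ n / 2 ^ card S"
proof -
  have "finite S" using assms finite_subset by auto
  from indep[OF this assms, of "\<lambda>x. True"] have "card {x\<in>cube n. \<forall>i\<in>S. x i} * 2 ^ card S = 2 ^ n"
    by (simp add: card_cube)
  then show ?thesis by (metis (mono_tags, lifting) nonzero_mult_div_cancel_right of_nat_mult of_nat_numeral of_nat_power power_not_zero zero_neq_numeral)
qed

lemma influence_tf:
  assumes "disj Ts" "\<forall>T\<in>set Ts. T \<subseteq> {..<n}" "T \<in> set Ts" "j \<in> T"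
  shows "influence n (tf Ts) j \<le> 1 / 2 ^ (card T - 1)"
proof -
  have uniq: "T' = T" if "T' \<in> set Ts" "j \<in> T'" for T'
    using assms(1,3,4) that
  proof (induction Ts)
    case Nil then show ?case by simp
  next
    case (Cons T0 Ts) then show ?case by auto
  qed
  have sub: "{x \<in> cube n. tf Ts x \<noteq> tf Ts (flip j x)} \<subseteq> {x\<in>cube n. \<forall>i\<in>T-{j}. x i}"
    using tf_inf_sub uniq by blast
  have "card {x \<in> cube n. tf Ts x \<noteq> tf Ts (flip j x)} \<le> card {x\<in>cube n. \<forall>i\<in>T-{j}. x i}"
    by (rule card_mono[OF _ sub]) (simp add: finite_cube)
  also have "real \<dots> = 2 ^ n / 2 ^ card (T - {j})"
    by (rule card_ones) (use assms in auto)
  finally have "real (card {x \<in> cube n. tf Ts x \<noteq> tf Ts (flip j x)}) \<le> 2 ^ n / 2 ^ (card T - 1)"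
    using assms(4) by simp
  then show ?thesis unfolding influence_def by (simp add: field_simps)
qed

lemma influence_tf0:
  assumes "j \<notin> \<Union>(set Ts)"
  shows "influence n (tf Ts) j = 0"
  unfolding influence_def using tf_flip[OF assms] by simp

lemma expect_tf:
  assumes "disj Ts" "\<forall>T\<in>set Ts. T \<subseteq> {..<n}"
  shows "expect n (tf Ts) = 1 - prod_list (map (\<lambda>T. 1 - (1/2) ^ card T) Ts)"
proof -
  have "cube n = {x\<in>cube n. tf Ts x} \<union> {x\<in>cube n. \<not> tf Ts x}" by auto
  then have "card (cube n) = card {x\<in>cube n. tf Ts x} + card {x\<in>cube n. \<not> tf Ts x}"
    by (subst card_Un_disjoint[symmetric]) (auto simp: finite_cube)
  then have "real (card (cube n)) = real (card {x\<in>cube n. tf Ts x}) + real (card {x\<in>cube n. \<not> tf Ts x})"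
    by (metis of_nat_add)
  then have c: "real (card {x\<in>cube n. tf Ts x}) = 2^n - 2 ^ n * prod_list (map (\<lambda>T. 1 - (1/2) ^ card T) Ts)"
    using card_not_tf[OF assms] by (simp add: card_cube)
  have "(\<Sum>x\<in>cube n. (if tf Ts x then 1 else 0::real)) = real (card {x\<in>cube n. tf Ts x})"
    by (simp add: sum.If_cases finite_cube Int_def)
  then show ?thesis unfolding expect_def c by (simp add: field_simps)
qed


lemma split_sets:
  assumes "finite P" "k > 0"
  shows "\<exists>Ts R. disj Ts \<and> (\<forall>T\<in>set Ts. T \<subseteq> P \<and> card T = k) \<and> length Ts = card P div k
          \<and> R \<subseteq> P \<and> R \<inter> \<Union>(set Ts) = {} \<and> card R = card P mod k"
  using assms
proof (induction "card P" arbitrary: P rule: less_induct)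
  case less
  show ?case
  proof (cases "card P < k")
    case True
    then show ?thesis by (intro exI[of _ "[]"] exI[of _ P]) auto
  next
    case False
    then obtain T where T: "T \<subseteq> P" "card T = k" by (meson not_less obtain_subset_with_card_n)
    have fT: "finite T" using T less.prems finite_subset by auto
    have cP: "card (P - T) = card P - k" using T fT by (simp add: card_Diff_subset)
    have "card (P - T) < card P" using cP less.prems False by simp
    then obtain Ts R where IH: "disj Ts" "\<forall>U\<in>set Ts. U \<subseteq> P - T \<and> card U = k"
      "length Ts = card (P - T) div k" "R \<subseteq> P - T" "R \<inter> \<Union>(set Ts) = {}" "card R = card (P - T) mod k"
      using less.hyps[of "P - T"] less.prems by (metis finite_Diff)
    have d: "T \<inter> \<Union>(set Ts) = {}" using IH(2) by blast
    obtain m where m: "card P = m + k" using False by (metis le_add_diff_inverse2 not_less)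
    have q: "card P div k = Suc (length Ts)" using IH(3) cP m less.prems(2) by simp
    have r: "card P mod k = card R" using IH(6) cP m by simp
    show ?thesis
      apply (intro exI[of _ "T # Ts"] exI[of _ R])
      using IH T d q r by auto
  qed
qed


definition v :: "nat \<Rightarrow> real" where "v c = 2 / (2 ^ c * real c)"

definition contrib :: "nat set list \<Rightarrow> real" where
  "contrib Ts = sum_list (map (\<lambda>T. (1/2) ^ card T) Ts)"

lemma contrib_append: "contrib (A @ B) = contrib A + contrib B"
  unfolding contrib_def by simp

lemma contrib_const: "\<forall>T\<in>set Ts. card T = k \<Longrightarrow> contrib Ts = real (length Ts) * (1/2) ^ k"
  unfolding contrib_def by (induction Ts) (auto simp: algebra_simps)

lemma v_nonneg: "v c \<ge> 0" unfolding v_def by simp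

lemma v_mono: "c \<ge> 1 \<Longrightarrow> v (Suc c) \<le> v c"
proof -
  assume c: "c \<ge> 1"
  have "(2::real) ^ c * real c \<le> 2 ^ Suc c * real (Suc c)"
    by (intro mult_mono) auto
  moreover have "(0::real) < 2 ^ c * real c" using c by simp
  ultimately show ?thesis unfolding v_def by (intro divide_left_mono) auto
qed

lemma arith_step:
  fixes D S V U h :: real and r N q r' c :: nat
  assumes "D \<le> S - (real c - real r) * V" "r \<le> c" "q * (c+2) + r' = r + N"
    "c > r \<Longrightarrow> V \<ge> U" "U \<ge> 0" "(c+2) * U \<le> h"
  shows "D + N * U - q * h \<le> (S + U) - (real (c+1) - real r') * U"
proof -
  have a: "(real c - real r) * U \<le> (real c - real r) * V"
    using assms(2,4) by (cases "c > r") (auto intro: mult_left_mono)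
  have b: "real q * ((c+2) * U) \<le> real q * h" using assms(6) by (simp add: mult_left_mono)
  have c: "real q * (c+2) + r' = r + N" using assms(3)
    by (metis of_nat_add of_nat_mult of_nat_numeral)
  have "D + N * U - q * h \<le> S - (real c - real r) * U + N * U - real q * ((c+2) * U)"
    using a b assms(1) by linarith
  also have "\<dots> = S - (real c - real r) * U + (N - real q * (c+2)) * U"
    by (simp add: algebra_simps)
  also have "\<dots> = S - (real c - real r) * U + (r' - real r) * U"
  proof -
    have "real N - real q * (c+2) = r' - real r" using c by simp
    then show ?thesis by simp
  qed
  also have "\<dots> = (S + U) - (real (c+1) - real r') * U" by (simp add: algebra_simps)
  finally show ?thesis .
qed

lemma U_h: "real (c+2) * (v (Suc c) / 8) \<le> (1/2) ^ (c+2)"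
proof -
  have "real (c+2) * (v (Suc c) / 8) = real (c+2) / (real (c+1) * 2 ^ (c+3))"
    unfolding v_def by (simp add: power_add divide_simps)
  also have "\<dots> \<le> 2 * real (c+1) / (real (c+1) * 2 ^ (c+3))"
    by (intro divide_right_mono) auto
  also have "\<dots> = (1/2) ^ (c+2)" by (simp add: power_add divide_simps)
  finally show ?thesis .
qed

lemma level:
  fixes cl :: "nat \<Rightarrow> nat"
  assumes "finite V" "\<forall>j\<in>V. cl j \<ge> 1"
  shows "\<exists>Ts R. disj Ts \<and> (\<forall>T\<in>set Ts. T \<subseteq> {j\<in>V. cl j \<le> c} \<and> 2 \<le> card T \<and> (\<forall>j\<in>T. cl j < card T))
     \<and> R \<subseteq> {j\<in>V. cl j \<le> c} \<and> R \<inter> \<Union>(set Ts) = {} \<and> card R \<le> c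
     \<and> (\<Sum>j\<in>{j\<in>V. cl j \<le> c}. v (cl j)) / 8 - contrib Ts \<le> (\<Sum>i\<le>c. v i) / 8 - (real c - real (card R)) * (v c / 8)"
proof (induction c)
  case 0
  have e: "{j\<in>V. cl j \<le> 0} = {}" using assms(2) by auto
  show ?case by (intro exI[of _ "[]"] exI[of _ "{}"]) (simp add: e contrib_def v_def)
next
  case (Suc c)
  then obtain Ts R where IH: "disj Ts" "\<forall>T\<in>set Ts. T \<subseteq> {j\<in>V. cl j \<le> c} \<and> 2 \<le> card T \<and> (\<forall>j\<in>T. cl j < card T)"
     "R \<subseteq> {j\<in>V. cl j \<le> c}" "R \<inter> \<Union>(set Ts) = {}" "card R \<le> c"
     "(\<Sum>j\<in>{j\<in>V. cl j \<le> c}. v (cl j)) / 8 - contrib Ts \<le> (\<Sum>i\<le>c. v i) / 8 - (real c - real (card R)) * (v c / 8)"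
    by blast
  define New where "New = {j\<in>V. cl j = Suc c}"
  define P where "P = R \<union> New"
  have fR: "finite R" using IH(3) assms(1) finite_subset by fastforce
  have fN: "finite New" using assms(1) unfolding New_def by simp
  have fP: "finite P" unfolding P_def using fR fN by simp
  have dRN: "R \<inter> New = {}" using IH(3) unfolding New_def by auto
  have cP: "card P = card R + card New" unfolding P_def using fR fN dRN by (simp add: card_Un_disjoint)
  obtain Ts2 R2 where S: "disj Ts2" "\<forall>T\<in>set Ts2. T \<subseteq> P \<and> card T = c+2" "length Ts2 = card P div (c+2)"
      "R2 \<subseteq> P" "R2 \<inter> \<Union>(set Ts2) = {}" "card R2 = card P mod (c+2)"
    using split_sets[OF fP, of "c+2"] by auto
  have PTs: "P \<inter> \<Union>(set Ts) = {}"
    using IH(2,4) unfolding P_def New_def by fastforce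
  have Psub: "P \<subseteq> {j\<in>V. cl j \<le> Suc c}" using IH(3) unfolding P_def New_def by auto
  have d: "disj (Ts2 @ Ts)"
    by (rule disj_append[OF S(1) IH(1)]) (use S(2) PTs in blast)
  have t: "\<forall>T\<in>set (Ts2 @ Ts). T \<subseteq> {j\<in>V. cl j \<le> Suc c} \<and> 2 \<le> card T \<and> (\<forall>j\<in>T. cl j < card T)"
  proof
    fix T assume "T \<in> set (Ts2 @ Ts)"
    then consider "T \<in> set Ts2" | "T \<in> set Ts" by auto
    then show "T \<subseteq> {j\<in>V. cl j \<le> Suc c} \<and> 2 \<le> card T \<and> (\<forall>j\<in>T. cl j < card T)"
    proof cases
      case 1
      then have "T \<subseteq> P" "card T = c+2" using S(2) by auto
      then show ?thesis using Psub by fastforce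
    next
      case 2
      then show ?thesis using IH(2) by fastforce
    qed
  qed
  have r2: "R2 \<subseteq> {j\<in>V. cl j \<le> Suc c}" "R2 \<inter> \<Union>(set (Ts2 @ Ts)) = {}" "card R2 \<le> Suc c"
    using S(4,5,6) Psub PTs by auto
  have sumsplit: "{j\<in>V. cl j \<le> Suc c} = {j\<in>V. cl j \<le> c} \<union> New" unfolding New_def by auto
  have "(\<Sum>j\<in>{j\<in>V. cl j \<le> Suc c}. v (cl j)) = (\<Sum>j\<in>{j\<in>V. cl j \<le> c}. v (cl j)) + (\<Sum>j\<in>New. v (cl j))"
    unfolding sumsplit by (rule sum.union_disjoint) (use assms(1) fN in \<open>auto simp: New_def\<close>)
  also have "(\<Sum>j\<in>New. v (cl j)) = real (card New) * v (Suc c)"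
    unfolding New_def by simp
  finally have sv: "(\<Sum>j\<in>{j\<in>V. cl j \<le> Suc c}. v (cl j)) / 8 = (\<Sum>j\<in>{j\<in>V. cl j \<le> c}. v (cl j)) / 8 + real (card New) * (v (Suc c) / 8)"
    by simp
  have ct: "contrib (Ts2 @ Ts) = contrib Ts + real (card P div (c+2)) * (1/2)^(c+2)"
    using contrib_append contrib_const[of Ts2 "c+2"] S(2,3) by simp
  have key: "((\<Sum>j\<in>{j\<in>V. cl j \<le> c}. v (cl j)) / 8 - contrib Ts) + real (card New) * (v (Suc c) / 8) - real (card P div (c+2)) * (1/2)^(c+2)
     \<le> ((\<Sum>i\<le>c. v i) / 8 + v (Suc c) / 8) - (real (c+1) - real (card P mod (c+2))) * (v (Suc c) / 8)"
  proof (rule arith_step[OF IH(6) IH(5)])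
    show "card P div (c + 2) * (c + 2) + card P mod (c + 2) = card R + card New"
      by (metis cP div_mult_mod_eq)
    show "c > card R \<Longrightarrow> v (Suc c) / 8 \<le> v c / 8" using v_mono[of c] by simp
    show "0 \<le> v (Suc c) / 8" using v_nonneg by simp
    show "real (c + 2) * (v (Suc c) / 8) \<le> (1 / 2) ^ (c + 2)" by (rule U_h)
  qed
  have "(\<Sum>j\<in>{j\<in>V. cl j \<le> Suc c}. v (cl j)) / 8 - contrib (Ts2 @ Ts) \<le> (\<Sum>i\<le>Suc c. v i) / 8 - (real (Suc c) - real (card R2)) * (v (Suc c) / 8)"
  proof -
    have e1: "sum v {..Suc c} = sum v {..c} + v (Suc c)" by simp
    have e2: "real (Suc c) = real (c+1)" by simp
    show ?thesis using key unfolding sv ct S(6) e1 e2 add_divide_distrib by argo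
  qed
  then show ?case using d t r2 by blast
qed

lemma S_bound: "(\<Sum>i\<le>C. v i) / 8 \<le> ln 2 / 4"
proof -
  have s: "(\<lambda>n. - ((-(-1/2::real))^n) / of_nat n) sums ln (1 + (-1/2))"
    by (rule ln_series') simp
  have "(\<lambda>n. (1/2::real)^n / of_nat n) sums (- ln (1/2))"
    using sums_minus[OF s] by simp
  then have s2: "(\<lambda>n. (1/2::real)^n / of_nat n) sums ln 2"
    by (simp add: ln_div)
  have "(\<Sum>i\<le>C. (1/2::real)^i / of_nat i) \<le> ln 2"
    using sum_le_suminf[OF sums_summable[OF s2], of "{..C}"] sums_unique[OF s2] by simp
  moreover have "(\<Sum>i\<le>C. v i) = 2 * (\<Sum>i\<le>C. (1/2::real)^i / of_nat i)"
    unfolding v_def sum_distrib_left by (rule sum.cong) (auto simp: power_one_over)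
  ultimately show ?thesis by simp
qed

lemma prod_exp:
  "prod_list (map (\<lambda>T. 1 - (1/2::real) ^ card T) Ts) \<le> exp (- contrib Ts)"
proof (induction Ts)
  case Nil then show ?case by (simp add: contrib_def)
next
  case (Cons T Ts)
  have c: "contrib (T # Ts) = (1/2)^card T + contrib Ts" unfolding contrib_def by simp
  have h1: "1 - (1/2::real) ^ card T \<le> exp (- ((1/2)^card T))"
    using exp_ge_add_one_self[of "- ((1/2::real)^card T)"] by simp
  have h0: "0 \<le> 1 - (1/2::real) ^ card T" by (simp add: power_le_one)
  have p0: "0 \<le> prod_list (map (\<lambda>T. 1 - (1/2::real) ^ card T) Ts)"
    by (induction Ts) (auto simp: power_le_one)
  have "prod_list (map (\<lambda>T. 1 - (1/2::real) ^ card T) (T # Ts))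
      = (1 - (1/2) ^ card T) * prod_list (map (\<lambda>T. 1 - (1/2::real) ^ card T) Ts)" by simp
  also have "\<dots> \<le> exp (- ((1/2)^card T)) * exp (- contrib Ts)"
    by (rule mult_mono[OF h1 Cons.IH]) (use p0 in auto)
  also have "\<dots> = exp (- contrib (T # Ts))" unfolding c by (simp add: exp_add[symmetric])
  finally show ?case .
qed

lemma valid_inf:
  fixes a :: real and k :: nat
  assumes "0 < a" "nat \<lfloor>1 - log 2 a\<rfloor> < k" "1 - log 2 a \<ge> 1"
  shows "1 / 2 ^ (k - 1) < a"
proof -
  have "\<lfloor>1 - log 2 a\<rfloor> < int k" using assms(2,3) by linarith
  then have "1 - log 2 a < real k" by (simp add: floor_less_iff)
  then have "1 - real k < log 2 a" by simp
  then have "2 powr (1 - real k) < 2 powr (log 2 a)" by (intro powr_less_mono) auto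
  also have "\<dots> = a" using assms(1) by simp
  finally have lt: "2 powr (1 - real k) < a" .
  have k1: "k \<ge> 1" using assms(2) by simp
  have e: "real (k - 1) = real k - 1" using k1 by (simp add: of_nat_diff)
  have "2 powr (1 - real k) * 2 ^ (k - 1) = 2 powr (1 - real k) * 2 powr (real (k - 1))"
    by (simp add: powr_realpow)
  also have "\<dots> = 2 powr ((1 - real k) + real (k - 1))" by (simp add: powr_add)
  also have "\<dots> = 1" unfolding e by simp
  finally have "2 powr (1 - real k) = 1 / 2 ^ (k - 1)" by (simp add: field_simps)
  then show ?thesis using lt by simp
qed
lemma w_le_v:
  fixes a :: real
  assumes "0 < a" "a \<le> 1"
  shows "a / (1 - log 2 a) \<le> v (nat \<lfloor>1 - log 2 a\<rfloor>)"
proof -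
  define L where "L = 1 - log 2 a"
  have L1: "L \<ge> 1" using assms unfolding L_def by simp
  define c where "c = nat \<lfloor>L\<rfloor>"
  have c1: "c \<ge> 1" using L1 unfolding c_def by linarith
  have cL: "real c \<le> L" using L1 unfolding c_def by linarith
  have "a = 2 powr (log 2 a)" using assms by simp
  also have "\<dots> = 2 powr (1 - L)" unfolding L_def by simp
  also have "\<dots> \<le> 2 powr (1 - real c)" using cL by simp
  also have "\<dots> = 2 / 2 ^ c" by (simp add: powr_diff powr_realpow)
  finally have ac: "a \<le> 2 / 2 ^ c" .
  have "a / L \<le> (2 / 2 ^ c) / real c"
    by (rule frac_le) (use ac c1 cL assms in auto)
  then show ?thesis unfolding v_def c_def L_def by (simp add: field_simps)
qed



lemma prod_nonneg_aux: "0 \<le> prod_list (map (\<lambda>T. 1 - (1/2::real) ^ card T) xs)"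
  by (induction xs) (auto simp: power_le_one)

theorem theorem1:
  fixes n :: nat and a :: "nat \<Rightarrow> real" and \<alpha> \<mu> :: real
  assumes "n > 0"
    and "\<forall>j<n. 0 < a j \<and> a j \<le> 1"
    and "\<alpha> = (\<Sum>j<n. a j / (1 - log 2 (a j))) - 2 * ln 2"
    and "0 < \<mu>" and "\<mu> \<le> 1 - exp (- \<alpha> / 8)"
  shows "\<exists>f :: (nat \<Rightarrow> bool) \<Rightarrow> bool.
           \<mu> \<le> expect n f \<and> expect n f \<le> 3/4 * \<mu> + 1/4 \<and>
           (\<forall>j<n. influence n f j < a j)"
proof -
  define cl where "cl j = nat \<lfloor>1 - log 2 (a j)\<rfloor>" for j
  have L1: "1 - log 2 (a j) \<ge> 1" if "j < n" for j
    using assms(2) that by simp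
  have cl1: "\<forall>j\<in>{..<n}. cl j \<ge> 1"
  proof
    fix j assume "j \<in> {..<n}"
    then have "1 \<le> \<lfloor>1 - log 2 (a j)\<rfloor>" using L1 by (simp add: le_floor_iff)
    then show "cl j \<ge> 1" unfolding cl_def by linarith
  qed
  define C where "C = Max (cl ` {..<n})"
  have clC: "cl j \<le> C" if "j < n" for j unfolding C_def using that by auto
  have "\<exists>Ts R. disj Ts \<and> (\<forall>T\<in>set Ts. T \<subseteq> {j\<in>{..<n}. cl j \<le> C} \<and> 2 \<le> card T \<and> (\<forall>j\<in>T. cl j < card T))
     \<and> R \<subseteq> {j\<in>{..<n}. cl j \<le> C} \<and> R \<inter> \<Union>(set Ts) = {} \<and> card R \<le> C
     \<and> (\<Sum>j\<in>{j\<in>{..<n}. cl j \<le> C}. v (cl j)) / 8 - contrib Ts \<le> (\<Sum>i\<le>C. v i) / 8 - (real C - real (card R)) * (v C / 8)"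
    by (rule level) (use cl1 in auto)
  then obtain Ts and R :: "nat set" where lv: "disj Ts" "\<forall>T\<in>set Ts. T \<subseteq> {j\<in>{..<n}. cl j \<le> C} \<and> 2 \<le> card T \<and> (\<forall>j\<in>T. cl j < card T)"
     "card R \<le> C"
     "(\<Sum>j\<in>{j\<in>{..<n}. cl j \<le> C}. v (cl j)) / 8 - contrib Ts \<le> (\<Sum>i\<le>C. v i) / 8 - (real C - real (card R)) * (v C / 8)"
    by blast
  have eV: "{j\<in>{..<n}. cl j \<le> C} = {..<n}" using clC by auto
  have sub: "\<forall>T\<in>set Ts. T \<subseteq> {..<n}" using lv(2) by auto
  have "0 \<le> (real C - real (card R)) * (v C / 8)" using lv(3) v_nonneg by simp
  then have "(\<Sum>j<n. v (cl j)) / 8 - contrib Ts \<le> ln 2 / 4"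
    using lv(4) S_bound[of C] unfolding eV by linarith
  moreover have "(\<Sum>j<n. a j / (1 - log 2 (a j))) \<le> (\<Sum>j<n. v (cl j))"
    unfolding cl_def by (rule sum_mono) (use assms(2) w_le_v in auto)
  ultimately have ca: "\<alpha> / 8 \<le> contrib Ts" using assms(3) by linarith
  define g where "g (T::nat set) = 1 - (1/2::real) ^ card T" for T
  define Pm where "Pm m = prod_list (map g (take m Ts))" for m
  have "Pm (length Ts) \<le> exp (- contrib Ts)" unfolding Pm_def g_def using prod_exp by simp
  also have "\<dots> \<le> exp (- \<alpha> / 8)" using ca by simp
  also have "\<dots> \<le> 1 - \<mu>" using assms(5) by simp
  finally have ex: "Pm (length Ts) \<le> 1 - \<mu>" .
  define m where "m = (LEAST m. Pm m \<le> 1 - \<mu>)"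
  have m1: "Pm m \<le> 1 - \<mu>" unfolding m_def by (rule LeastI[of "\<lambda>m. Pm m \<le> 1 - \<mu>" "length Ts", OF ex])
  have m2: "m \<le> length Ts" unfolding m_def by (rule Least_le[of "\<lambda>m. Pm m \<le> 1 - \<mu>", OF ex])
  have m0: "m \<noteq> 0" proof assume "m = 0" then show False using m1 assms(4) unfolding Pm_def by simp qed
  have m3: "\<not> Pm (m - 1) \<le> 1 - \<mu>" unfolding m_def by (rule not_less_Least) (use m0 m_def in auto)
  have ml: "m - 1 < length Ts" using m0 m2 by simp
  have "take m Ts = take (m - 1) Ts @ [Ts ! (m - 1)]" using ml m0 take_Suc_conv_app_nth[OF ml] by simp
  then have Pmm: "Pm m = Pm (m - 1) * g (Ts ! (m - 1))" unfolding Pm_def by simp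
  have "Ts ! (m - 1) \<in> set Ts" using ml by simp
  then have "card (Ts ! (m - 1)) \<ge> 2" using lv(2) by blast
  then have "(1/2::real) ^ card (Ts ! (m - 1)) \<le> (1/2) ^ 2" by (rule power_decreasing) auto
  then have g34: "g (Ts ! (m - 1)) \<ge> 3/4" unfolding g_def by (simp add: power2_eq_square)
  have Pm0: "Pm (m - 1) \<ge> 0" unfolding Pm_def g_def by (rule prod_nonneg_aux)
  define f where "f = tf (take m Ts)"
  have dt: "disj (take m Ts)" using lv(1) by (rule disj_take)
  have st: "\<forall>T\<in>set (take m Ts). T \<subseteq> {..<n}" using sub by (meson in_set_takeD)
  have E: "expect n f = 1 - Pm m" unfolding f_def Pm_def g_def using expect_tf[OF dt st] by simp
  have "\<mu> \<le> expect n f" using E m1 by simp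
  moreover have "expect n f \<le> 3/4 * \<mu> + 1/4"
  proof -
    have "Pm m \<ge> Pm (m - 1) * (3/4)" unfolding Pmm using g34 Pm0 by (intro mult_left_mono) auto
    then show ?thesis using E m3 by simp
  qed
  moreover have "\<forall>j<n. influence n f j < a j"
  proof (intro allI impI)
    fix j assume jn: "j < n"
    show "influence n f j < a j"
    proof (cases "j \<in> \<Union>(set (take m Ts))")
      case True
      then obtain T where T: "T \<in> set (take m Ts)" "j \<in> T" by auto
      then have TT: "T \<in> set Ts" by (meson in_set_takeD)
      have "influence n f j \<le> 1 / 2 ^ (card T - 1)" unfolding f_def
        by (rule influence_tf[OF dt st T])
      also have "\<dots> < a j"
        by (rule valid_inf) (use assms(2) jn L1 lv(2) TT T(2) cl_def in auto)
      finally show ?thesis .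
    next
      case False
      then show ?thesis unfolding f_def using influence_tf0 assms(2) jn by simp
    qed
  qed
  ultimately show ?thesis by blast
qed

end
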